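(* Let $P$ be a full-dimensional convex polytope in a real vector space $X$ of dimension $d\geq 1$, and consider the conditions: (i) There is a bilinear form $B$ on $X^*$ such that $B(f_1^\perp,f_2^\perp)>0$ for all facets $f_1,f_2\in F(P)$ (not necessarily distinct) that share a vertex. (ii) There is an assignment of a vector $x_f\in X$ to each $f\in F(P)$ such that $\langle f_1^\perp, x_{f_2}\rangle>0$ whenever $f_1,f_2$ (not necessarily distinct) share a vertex. (iii) There is an assignment of a point $u_f\in S^{d-1}$ to each $f\in F(P)$ such that for every open hemisphere $H\subseteq S^{d-1}$ there is a vertex $v\in V(P)$ with $u_f\in H$ for every facet $f$ containing $v$. (iv) $\chi(\mathrm{KG}(P))\geq d+1$. Then (i) $\Rightarrow$ (ii) $\Rightarrow$ (iii) $\Rightarrow$ (iv).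
   Context: $X^*$ is the dual space of $X$ and $\langle\cdot,\cdot\rangle$ the natural pairing. $V(P)$ and $F(P)$ denote the vertices and facets of $P$; for $f\in F(P)$, $f^\perp\in X^*$ denotes an outward normal of $f$. The Kneser graph $\mathrm{KG}(P)$ of the polytope $P$ has vertex set $V(P)$, two vertices being adjacent iff no facet of $P$ contains both. *)

theory Defs
  imports "HOL-Analysis.Analysis"
begin

text \<open>The ambient space X is an abstract Euclidean space 'a (dimension DIM('a) \<ge> 1).
  The dual space X^* is identified with X via the inner product, so the natural
  pairing is the inner product.\<close>

definition vertices_of :: "'a::euclidean_space set \<Rightarrow> 'a set" where
  "vertices_of P = {v. v extreme_point_of P}"

definition outward_normal :: "'a::euclidean_space set \<Rightarrow> 'a set \<Rightarrow> 'a \<Rightarrow> bool" where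
  "outward_normal P f n \<longleftrightarrow> n \<noteq> 0 \<and>
     (\<exists>b. P \<subseteq> {x. inner n x \<le> b} \<and> f = P \<inter> {x. inner n x = b})"

definition share_vertex :: "'a::euclidean_space set \<Rightarrow> 'a set \<Rightarrow> 'a set \<Rightarrow> bool" where
  "share_vertex P f1 f2 \<longleftrightarrow> (\<exists>v \<in> vertices_of P. v \<in> f1 \<and> v \<in> f2)"

definition kneser_adj :: "'a::euclidean_space set \<Rightarrow> 'a \<Rightarrow> 'a \<Rightarrow> bool" where
  "kneser_adj P v w \<longleftrightarrow> v \<noteq> w \<and> \<not> (\<exists>f. f facet_of P \<and> v \<in> f \<and> w \<in> f)"

definition chromatic_number :: "'v set \<Rightarrow> ('v \<Rightarrow> 'v \<Rightarrow> bool) \<Rightarrow> nat" where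
  "chromatic_number V E =
     (LEAST k. \<exists>c :: 'v \<Rightarrow> nat. (\<forall>v\<in>V. c v < k) \<and>
                  (\<forall>v\<in>V. \<forall>w\<in>V. E v w \<longrightarrow> c v \<noteq> c w))"

definition open_hemisphere :: "'a::euclidean_space set \<Rightarrow> bool" where
  "open_hemisphere H \<longleftrightarrow> (\<exists>a. a \<noteq> 0 \<and> H = {u \<in> sphere 0 1. inner a u > 0})"

end

theory Submission
  imports Defs "HOL-Analysis.Analysis" "HOL-Homology.Homology"
begin

lemma diff_normalize:
  fixes q :: "'a::euclidean_space \<Rightarrow> 'a"
  assumes "\<And>x. q differentiable at x" "\<And>x. x \<in> A \<Longrightarrow> q x \<noteq> 0"
  shows "(\<lambda>x. q x /\<^sub>R norm (q x)) differentiable_on A"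
proof (rule differentiable_at_imp_differentiable_on)
  fix x assume x: "x \<in> A"
  have n: "(norm \<circ> q) differentiable at x"
    by (rule differentiable_chain_at[OF assms(1) differentiable_norm_at[OF assms(2)[OF x]]])
  have i: "(inverse \<circ> (norm \<circ> q)) differentiable at x"
    apply (rule differentiable_chain_at[OF n])
    using assms(2)[OF x] by (simp add: field_differentiable_imp_differentiable field_differentiable_inverse)
  have "(\<lambda>x. inverse (norm (q x)) *\<^sub>R q x) differentiable at x"
    using i assms(1) by (simp add: differentiable_scaleR o_def)
  then show "(\<lambda>x. q x /\<^sub>R norm (q x)) differentiable at x"
    by (simp add: divide_inverse_commute)
qed


lemma odd_equator_homotopy:
  fixes S T :: "'a::euclidean_space set" and e :: 'a and \<pi> :: "'a \<Rightarrow> 'a" and F :: "'a \<Rightarrow> 'a"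
  assumes S: "subspace S" and T: "subspace T" and ST: "S \<subseteq> T"
    and eT: "e \<in> T" and en: "norm e = 1" and eS: "\<And>s. s \<in> S \<Longrightarrow> s \<bullet> e = 0"
    and Te: "\<And>z. z \<in> T \<Longrightarrow> z \<bullet> e = 0 \<Longrightarrow> z \<in> S"
    and \<pi>: "linear \<pi>" "\<And>z. \<pi> z \<in> T" "\<And>z. z \<in> T \<Longrightarrow> \<pi> z = z"
    and contF: "continuous_on (sphere 0 1 \<inter> T) F"
    and Fim: "\<And>x. x \<in> sphere 0 1 \<inter> T \<Longrightarrow> F x \<in> sphere 0 1 \<inter> T"
    and Fodd: "\<And>x. x \<in> sphere 0 1 \<inter> T \<Longrightarrow> F (-x) = - F x"
  obtains G where "continuous_on (sphere 0 1 \<inter> T) G"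
    "\<And>x. x \<in> sphere 0 1 \<inter> T \<Longrightarrow> G x \<in> sphere 0 1 \<inter> T"
    "\<And>x. x \<in> sphere 0 1 \<inter> T \<Longrightarrow> G (-x) = - G x"
    "\<And>x. x \<in> sphere 0 1 \<inter> S \<Longrightarrow> G x \<in> S"
    "homotopic_with_canon (\<lambda>x. True) (sphere 0 1 \<inter> T) (sphere 0 1 \<inter> T) F G"
proof -
  let ?ST = "sphere (0::'a) 1 \<inter> T" and ?SS = "sphere (0::'a) 1 \<inter> S"
  have negST: "-x \<in> ?ST" if "x \<in> ?ST" for x using that T by (auto simp: subspace_neg)
  have SSST: "?SS \<subseteq> ?ST" using ST by auto
  obtain B where B: "B > 0" "\<And>z. norm (\<pi> z) \<le> B * norm z"
    using linear_bounded_pos[OF \<pi>(1)] by blast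
  have cST: "compact ?ST" by (simp add: T closed_subspace compact_Int_closed)
  have cSS: "compact ?SS" by (simp add: S closed_subspace compact_Int_closed)
  obtain p where p: "polynomial_function p" "\<And>x. x \<in> ?ST \<Longrightarrow> norm (F x - p x) < 1/(2*B)"
    using Stone_Weierstrass_polynomial_function[OF cST contF, of "1/(2*B)"] B by auto
  define q where "q x = (1/2) *\<^sub>R (\<pi> (p x) - \<pi> (p (-x)))" for x
  have bl: "bounded_linear \<pi>" using \<pi>(1) linear_conv_bounded_linear by blast
  have qpoly: "polynomial_function q"
  proof -
    have 1: "polynomial_function (\<pi> \<circ> p)" by (intro polynomial_function_compose p(1) polynomial_function_bounded_linear bl)
    have "polynomial_function (p \<circ> uminus)"
      by (intro polynomial_function_compose p(1) polynomial_function_bounded_linear bounded_linear_minus bounded_linear_ident)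
    then have 2: "polynomial_function (\<pi> \<circ> (p \<circ> uminus))"
      using polynomial_function_compose polynomial_function_bounded_linear[OF bl] by blast
    show ?thesis using 1 2 unfolding q_def o_def by (intro polynomial_function_cmul polynomial_function_diff)
  qed
  have qdiff: "\<And>x. q differentiable at x" using qpoly differentiable_at_polynomial_function by blast
  have qcont: "continuous_on A q" for A using qpoly differentiable_imp_continuous_on differentiable_on_polynomial_function by blast
  have qT: "q x \<in> T" for x unfolding q_def using T \<pi>(2) by (simp add: subspace_diff subspace_scale)
  have qodd: "q (-x) = - q x" for x unfolding q_def by (simp add: algebra_simps)
  have qF: "norm (F x - q x) < 1/2" if x: "x \<in> ?ST" for x
  proof -
    have Fx: "F x \<in> T" "F (-x) \<in> T" using Fim[OF x] Fim[OF negST[OF x]] by auto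
    have "F x - q x = (1/2) *\<^sub>R (\<pi> (F x - p x) - \<pi> (F (-x) - p (-x)))"
      unfolding q_def using Fx Fodd[OF x] \<pi>(3)[of "F x"] \<pi>(3)[of "F (-x)"]
      by (simp add: linear_diff[OF \<pi>(1)] algebra_simps) (simp flip: scaleR_add_left)
    also have "norm \<dots> \<le> (1/2) * (norm (\<pi> (F x - p x)) + norm (\<pi> (F (-x) - p (-x))))"
      by (simp add: norm_triangle_ineq4)
    also have "\<dots> \<le> (1/2) * (B * norm (F x - p x) + B * norm (F (-x) - p (-x)))"
      using B(2) by (intro mult_left_mono add_mono) auto
    also have "\<dots> < (1/2) * (B * (1/(2*B)) + B * (1/(2*B)))"
      using p(2)[OF x] p(2)[OF negST[OF x]] B(1)
      by (intro mult_strict_left_mono add_strict_mono) auto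
    also have "\<dots> = 1/2" using B(1) by simp
    finally show ?thesis .
  qed
  have qbig: "norm (q x) > 1/2" if x: "x \<in> ?ST" for x
  proof -
    have "norm (F x) = 1" using Fim[OF x] by simp
    then show ?thesis using qF[OF x] norm_triangle_ineq2[of "F x" "q x"] by linarith
  qed
  have qnz: "q x \<noteq> 0" if "x \<in> ?ST" for x using qbig[OF that] by auto
  define f1 where "f1 x = q x /\<^sub>R norm (q x)" for x
  have f1d: "f1 differentiable_on ?SS"
    unfolding f1_def by (rule diff_normalize[OF qdiff]) (use qnz SSST in auto)
  have f1odd: "f1 (-x) = - f1 x" for x unfolding f1_def by (simp add: qodd)
  have f1im: "f1 ` ?SS \<subseteq> ?ST"
    using qnz SSST qT T by (auto simp: f1_def subspace_scale)
  have eNS: "e \<notin> S" using eS[of e] en by (auto simp: norm_eq_sqrt_inner)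
  have dimST: "dim S < dim T"
  proof (rule dim_psubset)
    have e1: "span S = S" and e2: "span T = T" using S T span_eq_iff by auto
    show "span S \<subset> span T" unfolding e1 e2 using ST eT eNS by blast
  qed
  obtain c0 where c0: "c0 \<in> ?ST" "c0 \<notin> f1 ` ?SS"
    using spheremap_lemma1[OF S T dimST ST f1d] f1im by blast
  define K where "K = f1 ` ?SS"
  have Kc: "compact K" unfolding K_def
    by (rule compact_continuous_image[OF differentiable_imp_continuous_on[OF f1d] cSS])
  obtain c where c: "c \<in> ?ST" "c \<notin> K" "c \<bullet> e \<noteq> 0"
  proof (cases "c0 \<bullet> e = 0")
    case False then show ?thesis using that c0 K_def by blast
  next
    case True
    have "open (- K)" using Kc compact_imp_closed by blast
    then obtain \<epsilon> where \<epsilon>: "\<epsilon> > 0" "ball c0 \<epsilon> \<subseteq> - K"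
      using c0(2) K_def open_contains_ball by blast
    define g where "g t = (c0 + t *\<^sub>R e) /\<^sub>R norm (c0 + t *\<^sub>R e)" for t :: real
    have c0n: "norm c0 = 1" using c0 by simp
    have ee: "e \<bullet> e = 1" using en by (simp add: norm_eq_1)
    have c0c0: "c0 \<bullet> c0 = 1" using c0n by (simp add: norm_eq_1)
    have nz: "c0 + t *\<^sub>R e \<noteq> 0" for t
    proof
      assume "c0 + t *\<^sub>R e = 0"
      then have "c0 \<bullet> (c0 + t *\<^sub>R e) = 0" by simp
      then show False using True c0c0 by (simp add: inner_add_right inner_commute)
    qed
    have "continuous (at 0) g" unfolding g_def using nz[of 0] by (intro continuous_intros) auto
    then obtain \<delta> where \<delta>: "\<delta>>0" "\<And>t. dist t 0 < \<delta> \<Longrightarrow> dist (g t) (g 0) < \<epsilon>"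
      using continuous_at_eps_delta \<epsilon>(1) by metis
    have g0: "g 0 = c0" using c0n by (simp add: g_def)
    define t where "t = \<delta>/2"
    have t: "t > 0" "dist t 0 < \<delta>" using \<delta>(1) by (auto simp: t_def)
    show thesis
    proof (rule that[of "g t"])
      have "c0 + t *\<^sub>R e \<in> T" using c0 eT T by (simp add: subspace_add subspace_scale)
      then show "g t \<in> ?ST" using nz[of t] T by (simp add: g_def subspace_scale)
      have "dist c0 (g t) < \<epsilon>" using \<delta>(2)[OF t(2)] g0 by (simp add: dist_commute)
      then show "g t \<notin> K" using \<epsilon>(2) by auto
      have "g t \<bullet> e = t / norm (c0 + t *\<^sub>R e)"
        using True ee by (simp add: g_def inner_add_left divide_inverse_commute)
      then show "g t \<bullet> e \<noteq> 0" using t(1) nz[of t] by simp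
    qed
  qed
  have notpar: "q x \<noteq> l *\<^sub>R c" if x: "x \<in> ?SS" for x l
  proof
    assume qx: "q x = l *\<^sub>R c"
    have cn: "norm c = 1" using c by simp
    have "l \<noteq> 0" using qnz[of x] x SSST qx by auto
    have nq: "norm (q x) = \<bar>l\<bar>" using qx cn by simp
    have mx: "-x \<in> ?SS" using x S by (auto simp: subspace_neg)
    show False
    proof (cases "l > 0")
      case True
      then have "f1 x = c" using qx nq by (simp add: f1_def)
      then show False using c(2) x K_def by auto
    next
      case False
      then have "f1 x = - c" using qx nq \<open>l \<noteq> 0\<close> by (simp add: f1_def)
      then have "f1 (-x) = c" by (simp add: f1odd)
      then show False using c(2) mx K_def by force
    qed
  qed
  define \<phi> where "\<phi> x = 1 - \<bar>x \<bullet> e\<bar>" for x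
  define lam where "lam x = (q x \<bullet> e) / (c \<bullet> e)" for x
  define r where "r x = q x - (\<phi> x * lam x) *\<^sub>R c" for x
  have key: "q x - (t * \<phi> x * lam x) *\<^sub>R c \<noteq> 0" if x: "x \<in> ?ST" and t: "0 \<le> t" "t \<le> 1" for x t
  proof
    define s where "s = t * \<phi> x * lam x"
    assume "q x - (t * \<phi> x * lam x) *\<^sub>R c = 0"
    then have qs: "q x = s *\<^sub>R c" by (simp add: s_def)
    then have "q x \<bullet> e = s * (c \<bullet> e)" by simp
    then have ls: "lam x = s" using c(3) by (simp add: lam_def)
    have "s \<noteq> 0" using qs qnz[OF x] by auto
    then have "t * \<phi> x = 1" using ls s_def by (metis mult.commute mult_cancel_right1 mult.assoc)
    moreover have "\<phi> x \<le> 1" by (simp add: \<phi>_def)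
    moreover note tp = this
    ultimately have "\<phi> x = 1"
    proof -
      have p1: "\<phi> x \<le> 1" by (simp add: \<phi>_def)
      show "\<phi> x = 1"
      proof (rule ccontr)
        assume "\<phi> x \<noteq> 1" then have lt: "\<phi> x < 1" using p1 by simp
        show False
        proof (cases "\<phi> x \<le> 0")
          case True then have "t * \<phi> x \<le> 0" using t by (simp add: mult_nonneg_nonpos)
          then show False using \<open>t * \<phi> x = 1\<close> by simp
        next
          case False then have "t * \<phi> x \<le> 1 * \<phi> x" using t by (intro mult_right_mono) auto
          then show False using \<open>t * \<phi> x = 1\<close> lt by simp
        qed
      qed
    qed
    then have "x \<bullet> e = 0" by (simp add: \<phi>_def)
    then have "x \<in> ?SS" using x Te by auto
    then show False using notpar qs by blast
  qed
  have rnz: "r x \<noteq> 0" if "x \<in> ?ST" for x using key[OF that, of 1] by (simp add: r_def)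
  have rT: "r x \<in> T" for x using qT c T by (simp add: r_def subspace_diff subspace_scale)
  have rcont: "continuous_on ?ST r"
    unfolding r_def \<phi>_def lam_def using c(3) by (intro continuous_intros qcont) auto
  have rodd: "r (-x) = - r x" for x
  proof -
    have p: "\<phi> (-x) = \<phi> x" by (simp add: \<phi>_def)
    have l: "lam (-x) = - lam x" by (simp add: lam_def qodd)
    have "r (-x) = - q x + (\<phi> x * lam x) *\<^sub>R c" by (simp add: r_def qodd p l)
    also have "\<dots> = - r x" by (simp add: r_def)
    finally show ?thesis .
  qed
  define \<nu> where "\<nu> z = z /\<^sub>R norm z" for z :: 'a
  have \<nu>cont: "continuous_on (T - {0}) \<nu>" unfolding \<nu>_def by (intro continuous_intros) auto
  have \<nu>im: "\<nu> \<in> (T - {0}) \<rightarrow> ?ST" using T by (auto simp: \<nu>_def subspace_scale)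
  have H1: "homotopic_with_canon (\<lambda>x. True) ?ST (T - {0}) F q"
  proof (rule homotopic_with_linear[OF contF qcont])
    fix x assume x: "x \<in> ?ST"
    have "closed_segment (F x) (q x) \<subseteq> T"
      using Fim[OF x] qT by (intro closed_segment_subset subspace_imp_convex T) auto
    moreover have "0 \<notin> closed_segment (F x) (q x)"
    proof
      assume "0 \<in> closed_segment (F x) (q x)"
      then have "dist 0 (F x) \<le> dist (F x) (q x)" using dist_in_closed_segment by blast
      then show False using qF[OF x] Fim[OF x] by (simp add: dist_norm)
    qed
    ultimately show "closed_segment (F x) (q x) \<subseteq> T - {0}" by blast
  qed
  have H2: "homotopic_with_canon (\<lambda>x. True) ?ST (T - {0}) q r"
  proof (rule homotopic_with_linear[OF qcont rcont])
    fix x assume x: "x \<in> ?ST"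
    show "closed_segment (q x) (r x) \<subseteq> T - {0}"
    proof
      fix z assume "z \<in> closed_segment (q x) (r x)"
      then obtain u where u: "0 \<le> u" "u \<le> 1" "z = (1 - u) *\<^sub>R q x + u *\<^sub>R r x"
        by (auto simp: in_segment)
      then have "z = q x - (u * \<phi> x * lam x) *\<^sub>R c" by (simp add: r_def algebra_simps)
      then have "z \<noteq> 0" using key[OF x u(1,2)] by simp
      moreover have "z \<in> T" using u(3) rT qT T by (simp add: subspace_add subspace_scale)
      ultimately show "z \<in> T - {0}" by simp
    qed
  qed
  have H: "homotopic_with_canon (\<lambda>x. True) ?ST ?ST (\<nu> \<circ> F) (\<nu> \<circ> r)"
    using homotopic_with_trans[OF homotopic_with_compose_continuous_left[OF H1 \<nu>cont \<nu>im]
                                  homotopic_with_compose_continuous_left[OF H2 \<nu>cont \<nu>im]] by simp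
  show ?thesis
  proof (rule that[of "\<lambda>x. \<nu> (r x)"])
    show "continuous_on ?ST (\<lambda>x. \<nu> (r x))"
    proof -
      have "r ` ?ST \<subseteq> T - {0}" using rT rnz by auto
      then show ?thesis
        using continuous_on_compose[OF rcont continuous_on_subset[OF \<nu>cont]] by (simp add: o_def)
    qed
    show "\<nu> (r x) \<in> ?ST" if "x \<in> ?ST" for x using \<nu>im rT rnz that by auto
    show "\<nu> (r (-x)) = - \<nu> (r x)" if "x \<in> ?ST" for x by (simp add: \<nu>_def rodd)
    show "\<nu> (r x) \<in> S" if x: "x \<in> ?SS" for x
    proof -
      have "x \<bullet> e = 0" using x eS by auto
      then have "r x \<bullet> e = 0" using c(3) by (simp add: r_def \<phi>_def lam_def inner_diff_left)
      then have "r x \<in> S" using Te rT by auto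
      then show ?thesis using S by (simp add: \<nu>_def subspace_scale)
    qed
    show "homotopic_with_canon (\<lambda>x. True) ?ST ?ST F (\<lambda>x. \<nu> (r x))"
      by (rule homotopic_with_eq[OF H]) (use Fim in \<open>auto simp: \<nu>_def\<close>)
  qed
qed


locale bbasis =
  fixes b :: "nat \<Rightarrow> 'a::euclidean_space"
  assumes bbij: "bij_betw b {..<DIM('a)} Basis"
begin

definition VV :: "nat \<Rightarrow> 'a set" where
  "VV k = {v. \<forall>i. k < i \<and> i < DIM('a) \<longrightarrow> v \<bullet> b i = 0}"
definition phi :: "nat \<Rightarrow> (nat \<Rightarrow> real) \<Rightarrow> 'a" where
  "phi k x = (\<Sum>i\<le>k. x i *\<^sub>R b i)"
definition psi :: "nat \<Rightarrow> 'a \<Rightarrow> (nat \<Rightarrow> real)" where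
  "psi k v = (\<lambda>i. if i \<le> k then v \<bullet> b i else 0)"

lemma bB: "i < DIM('a) \<Longrightarrow> b i \<in> Basis"
  using bbij by (auto simp: bij_betw_def)

lemma b_inner: "i < DIM('a) \<Longrightarrow> j < DIM('a) \<Longrightarrow> b i \<bullet> b j = (if i = j then 1 else 0)"
  using bbij bB[of i] bB[of j] by (auto simp: bij_betw_def inj_on_def inner_Basis)

lemma b_repr: "(\<Sum>i<DIM('a). (v \<bullet> b i) *\<^sub>R b i) = v"
proof -
  have "(\<Sum>i<DIM('a). (v \<bullet> b i) *\<^sub>R b i) = (\<Sum>u\<in>Basis. (v \<bullet> u) *\<^sub>R u)"
    using sum.reindex_bij_betw[OF bbij, of "\<lambda>u. (v \<bullet> u) *\<^sub>R u"] by simp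
  then show ?thesis by (simp add: euclidean_representation)
qed

lemma inner_sum_b:
  assumes "I \<subseteq> {..<DIM('a)}" "j < DIM('a)"
  shows "(\<Sum>i\<in>I. c i *\<^sub>R b i) \<bullet> b j = (if j \<in> I then c j else 0)"
proof -
  have fin: "finite I" using assms(1) finite_subset by blast
  have "(\<Sum>i\<in>I. c i *\<^sub>R b i) \<bullet> b j = (\<Sum>i\<in>I. c i * (b i \<bullet> b j))"
    by (simp add: inner_sum_left)
  also have "\<dots> = (\<Sum>i\<in>I. if i = j then c i else 0)"
    using assms by (intro sum.cong refl) (auto simp: b_inner)
  also have "\<dots> = (if j \<in> I then c j else 0)"
    using fin by (simp add: sum.delta')
  finally show ?thesis .
qed

lemma norm_sum_b:
  assumes "I \<subseteq> {..<DIM('a)}"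
  shows "(norm (\<Sum>i\<in>I. c i *\<^sub>R b i))\<^sup>2 = (\<Sum>i\<in>I. (c i)\<^sup>2)"
proof -
  have "(norm (\<Sum>i\<in>I. c i *\<^sub>R b i))\<^sup>2 = (\<Sum>i\<in>I. c i *\<^sub>R b i) \<bullet> (\<Sum>i\<in>I. c i *\<^sub>R b i)"
    by (simp add: power2_norm_eq_inner)
  also have "\<dots> = (\<Sum>j\<in>I. (c j *\<^sub>R b j) \<bullet> (\<Sum>i\<in>I. c i *\<^sub>R b i))"
    by (rule inner_sum_left)
  also have "\<dots> = (\<Sum>j\<in>I. c j * ((\<Sum>i\<in>I. c i *\<^sub>R b i) \<bullet> b j))"
    by (intro sum.cong refl) (simp only: inner_scaleR_left inner_commute)
  also have "\<dots> = (\<Sum>j\<in>I. (c j)\<^sup>2)"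
  proof (intro sum.cong refl)
    fix j assume j: "j \<in> I"
    then have jd: "j < DIM('a)" using assms by auto
    show "c j * ((\<Sum>i\<in>I. c i *\<^sub>R b i) \<bullet> b j) = (c j)\<^sup>2"
      using inner_sum_b[OF assms jd] j by (simp add: power2_eq_square)
  qed
  finally show ?thesis .
qed

lemma subspace_VV: "subspace (VV k)"
  unfolding subspace_def VV_def by (auto simp: inner_add_left)

lemma VV_repr:
  assumes "v \<in> VV k" "k < DIM('a)"
  shows "(\<Sum>i\<le>k. (v \<bullet> b i) *\<^sub>R b i) = v"
proof -
  have "(\<Sum>i\<le>k. (v \<bullet> b i) *\<^sub>R b i) = (\<Sum>i<DIM('a). (v \<bullet> b i) *\<^sub>R b i)"
    using assms by (intro sum.mono_neutral_left) (auto simp: VV_def)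
  then show ?thesis by (simp add: b_repr)
qed

lemma atMost_sub: "k < DIM('a) \<Longrightarrow> {..k} \<subseteq> {..<DIM('a)}"
  by auto

lemma phi_VV: "k < DIM('a) \<Longrightarrow> phi k x \<in> VV k"
  unfolding VV_def phi_def by (auto simp: inner_sum_b[OF atMost_sub])

lemma psi_phi:
  assumes "x \<in> topspace (nsphere k)" "k < DIM('a)"
  shows "psi k (phi k x) = x"
proof
  fix j
  have "\<forall>i>k. x i = 0" using assms(1) by (simp add: nsphere)
  then show "psi k (phi k x) j = x j"
    using assms(2) by (auto simp: psi_def phi_def inner_sum_b[OF atMost_sub])
qed

lemma phi_psi: "v \<in> VV k \<Longrightarrow> k < DIM('a) \<Longrightarrow> phi k (psi k v) = v"
  unfolding phi_def psi_def by (simp add: VV_repr)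

lemma phi_sphere:
  assumes "x \<in> topspace (nsphere k)" "k < DIM('a)"
  shows "phi k x \<in> sphere 0 1 \<inter> VV k"
proof -
  have "(norm (phi k x))\<^sup>2 = (\<Sum>i\<le>k. (x i)\<^sup>2)"
    unfolding phi_def using assms(2) by (intro norm_sum_b) auto
  also have "\<dots> = 1" using assms(1) by (simp add: nsphere)
  finally have "norm (phi k x) = 1" using norm_ge_zero[of "phi k x"] by (auto simp: power2_eq_1_iff)
  then show ?thesis using phi_VV[OF assms(2)] by simp
qed

lemma psi_sphere:
  assumes "v \<in> sphere 0 1 \<inter> VV k" "k < DIM('a)"
  shows "psi k v \<in> topspace (nsphere k)"
proof -
  have "(\<Sum>i\<le>k. (psi k v i)\<^sup>2) = (norm (phi k (psi k v)))\<^sup>2"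
    unfolding phi_def using assms(2) by (intro norm_sum_b[symmetric]) auto
  also have "\<dots> = 1" using assms phi_psi by auto
  finally show ?thesis by (simp add: nsphere psi_def)
qed

lemma cont_phi: "k < DIM('a) \<Longrightarrow> continuous_map (nsphere k) (top_of_set (sphere 0 1 \<inter> VV k)) (phi k)"
proof -
  assume k: "k < DIM('a)"
  have sc: "continuous_map (nsphere k) euclidean (\<lambda>x. x i *\<^sub>R b i)" for i
  proof -
    have cm: "continuous_map euclideanreal euclidean (\<lambda>t. t *\<^sub>R b i)"
      by (simp add: continuous_on_scaleR continuous_on_id continuous_on_const)
    show ?thesis
      using continuous_map_compose[OF continuous_map_nsphere_projection[of k i] cm] by (simp add: o_def)
  qed
  have "continuous_map (nsphere k) euclidean (phi k)"
    unfolding phi_def by (intro continuous_map_sum sc) auto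
  then show ?thesis
    using phi_sphere[OF _ k] by (simp add: continuous_map_in_subtopology)
qed

lemma cont_psi: "k < DIM('a) \<Longrightarrow> continuous_map (top_of_set (sphere 0 1 \<inter> VV k)) (nsphere k) (psi k)"
proof -
  assume k: "k < DIM('a)"
  have "continuous_map (top_of_set (sphere 0 1 \<inter> VV k)) (powertop_real UNIV) (psi k)"
    unfolding continuous_map_componentwise_UNIV psi_def
    by (auto intro!: continuous_intros)
  moreover have "psi k \<in> topspace (top_of_set (sphere 0 1 \<inter> VV k)) \<rightarrow> {x. (\<Sum>i\<le>k. x i ^ 2) = 1 \<and> (\<forall>i>k. x i = 0)}"
    using psi_sphere[OF _ k] by (auto simp: nsphere)
  ultimately show ?thesis
    by (subst nsphere) (simp only: continuous_map_in_subtopology)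
qed

end


context bbasis
begin

lemma phi_neg: "phi k (\<lambda>i. - x i) = - phi k x"
  by (simp add: phi_def sum_negf)

lemma psi_neg: "psi k (- v) = (\<lambda>i. - psi k v i)"
  by (auto simp: psi_def)

lemma topspace_nsphere0:
  assumes "u \<in> topspace (nsphere 0)"
  shows "u = (\<lambda>i. if i = 0 then 1 else 0) \<or> u = (\<lambda>i. - (if i = 0 then 1 else 0))"
proof -
  have u0: "(u 0)\<^sup>2 = 1" and ui: "\<And>i. i > 0 \<Longrightarrow> u i = 0" using assms by (auto simp: nsphere)
  then have "u 0 = 1 \<or> u 0 = -1" by (simp add: power2_eq_1_iff)
  then show ?thesis
  proof
    assume "u 0 = 1" then have "u = (\<lambda>i. if i = 0 then 1 else 0)" using ui by (auto simp: fun_eq_iff)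
    then show ?thesis by blast
  next
    assume "u 0 = -1" then have "u = (\<lambda>i. - (if i = 0 then 1 else 0))" using ui by (auto simp: fun_eq_iff)
    then show ?thesis by blast
  qed
qed

lemma borsuk_deg0:
  assumes cf: "continuous_map (nsphere 0) (nsphere 0) f"
    and oddf: "\<forall>u\<in>topspace (nsphere 0). f (\<lambda>i. - u i) = (\<lambda>i. - f u i)"
  shows "odd (Brouwer_degree2 0 f)"
proof -
  define e0 where "e0 = (\<lambda>i::nat. if i = 0 then 1 else (0::real))"
  have e0t: "e0 \<in> topspace (nsphere 0)" unfolding e0_def by (rule in_topspace_nsphere)
  have me0t: "(\<lambda>i. - e0 i) \<in> topspace (nsphere 0)"
    using e0t by (auto simp: nsphere e0_def)
  have fe0: "f e0 \<in> topspace (nsphere 0)" using continuous_map_image_subset_topspace[OF cf] e0t by blast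
  have fme0: "f (\<lambda>i. - e0 i) = (\<lambda>i. - f e0 i)" using oddf e0t by blast
  have ts: "u = e0 \<or> u = (\<lambda>i. - e0 i)" if "u \<in> topspace (nsphere 0)" for u
    using topspace_nsphere0[OF that] by (simp add: e0_def)
  from ts[OF fe0] show ?thesis
  proof
    assume fe: "f e0 = e0"
    have "Brouwer_degree2 0 f = Brouwer_degree2 0 id"
    proof (rule Brouwer_degree2_eq)
      fix u assume "u \<in> topspace (nsphere 0)"
      then show "f u = id u" using ts fe fme0 by auto
    qed
    then show ?thesis by simp
  next
    assume fe: "f e0 = (\<lambda>i. - e0 i)"
    have "Brouwer_degree2 0 f = Brouwer_degree2 0 (\<lambda>x i. if i = 0 then -x i else x i)"
    proof (rule Brouwer_degree2_eq)
      fix u assume "u \<in> topspace (nsphere 0)"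
      then consider "u = e0" | "u = (\<lambda>i. - e0 i)" using ts by blast
      then show "f u = (\<lambda>i. if i = 0 then -u i else u i)"
      proof cases
        case 1
        have "f u = (\<lambda>i. - e0 i)" using fe 1 by simp
        moreover have "(\<lambda>i. if i = 0 then - u i else u i) = (\<lambda>i. - e0 i)" using 1 by (auto simp: fun_eq_iff e0_def)
        ultimately show ?thesis by simp
      next
        case 2
        have "f u = e0" using fe fme0 2 by simp
        moreover have "(\<lambda>i. if i = 0 then - u i else u i) = e0" using 2 by (auto simp: fun_eq_iff e0_def)
        ultimately show ?thesis by simp
      qed
    qed
    then show ?thesis by (simp add: Brouwer_degree2_reflection)
  qed
qed

lemma linear_proj: "linear (\<lambda>z. \<Sum>i\<le>K. (z \<bullet> b i) *\<^sub>R b i)"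
  by (rule linearI) (simp_all add: inner_add_left scaleR_add_left sum.distrib scaleR_sum_right)

lemma borsuk_deg_step:
  assumes k: "Suc k < DIM('a)"
    and IH: "\<And>g. continuous_map (nsphere k) (nsphere k) g \<Longrightarrow>
               (\<forall>u\<in>topspace (nsphere k). g (\<lambda>i. - u i) = (\<lambda>i. - g u i)) \<Longrightarrow> odd (Brouwer_degree2 k g)"
    and cf: "continuous_map (nsphere (Suc k)) (nsphere (Suc k)) f"
    and oddf: "\<forall>u\<in>topspace (nsphere (Suc k)). f (\<lambda>i. - u i) = (\<lambda>i. - f u i)"
  shows "odd (Brouwer_degree2 (Suc k) f)"
proof -
  let ?K = "Suc k"
  let ?ST = "sphere (0::'a) 1 \<inter> VV ?K" and ?SS = "sphere (0::'a) 1 \<inter> VV k"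
  have k': "k < DIM('a)" using k by simp
  define F where "F = phi ?K \<circ> f \<circ> psi ?K"
  have fts: "f u \<in> topspace (nsphere ?K)" if "u \<in> topspace (nsphere ?K)" for u
    using continuous_map_image_subset_topspace[OF cf] that by blast
  have cF: "continuous_map (top_of_set ?ST) (top_of_set ?ST) F"
    unfolding F_def using continuous_map_compose[OF continuous_map_compose[OF cont_psi[OF k] cf] cont_phi[OF k]] by (simp add: o_assoc)
  then have contF: "continuous_on ?ST F" and Fim: "\<And>x. x \<in> ?ST \<Longrightarrow> F x \<in> ?ST"
    by (auto simp: continuous_map_in_subtopology)
  have Fodd: "F (-x) = - F x" if "x \<in> ?ST" for x
  proof -
    have "psi ?K x \<in> topspace (nsphere ?K)" using psi_sphere[OF that k] .
    then show ?thesis using oddf by (simp add: F_def psi_neg phi_neg)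
  qed
  have eT: "b ?K \<in> VV ?K" using k by (auto simp: VV_def b_inner)
  have en: "norm (b ?K) = 1" using bB[OF k] by simp
  have eS: "s \<bullet> b ?K = 0" if "s \<in> VV k" for s using that k by (auto simp: VV_def)
  have Te: "z \<in> VV k" if "z \<in> VV ?K" "z \<bullet> b ?K = 0" for z
    using that unfolding VV_def by (auto dest: Suc_lessI)
  have STsub: "VV k \<subseteq> VV ?K" by (auto simp: VV_def)
  have piT: "(\<Sum>i\<le>?K. (z \<bullet> b i) *\<^sub>R b i) \<in> VV ?K" for z
    using phi_VV[OF k, of "\<lambda>i. z \<bullet> b i"] by (simp add: phi_def)
  have piid: "(\<Sum>i\<le>?K. (z \<bullet> b i) *\<^sub>R b i) = z" if "z \<in> VV ?K" for z
    using VV_repr[OF that k] .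
  obtain G where cG: "continuous_on ?ST G" and Gim: "\<And>x. x \<in> ?ST \<Longrightarrow> G x \<in> ?ST"
    and Godd: "\<And>x. x \<in> ?ST \<Longrightarrow> G (-x) = - G x"
    and GS: "\<And>x. x \<in> ?SS \<Longrightarrow> G x \<in> VV k"
    and hFG: "homotopic_with_canon (\<lambda>x. True) ?ST ?ST F G"
  proof (rule odd_equator_homotopy[OF subspace_VV subspace_VV STsub eT en eS Te linear_proj piT piid contF Fim Fodd])
    fix G assume "continuous_on ?ST G" "\<And>x. x \<in> ?ST \<Longrightarrow> G x \<in> ?ST"
      "\<And>x. x \<in> ?ST \<Longrightarrow> G (-x) = - G x" "\<And>x. x \<in> ?SS \<Longrightarrow> G x \<in> VV k"
      "homotopic_with_canon (\<lambda>x. True) ?ST ?ST F G"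
    then show thesis using that by blast
  qed
  define f' where "f' = psi ?K \<circ> G \<circ> phi ?K"
  have h1: "homotopic_with (\<lambda>x. True) (top_of_set ?ST) (nsphere ?K) (psi ?K \<circ> F) (psi ?K \<circ> G)"
    by (rule homotopic_with_compose_continuous_map_left[OF hFG cont_psi[OF k]]) simp
  have h2: "homotopic_with (\<lambda>x. True) (nsphere ?K) (nsphere ?K) (psi ?K \<circ> F \<circ> phi ?K) f'"
    unfolding f'_def by (rule homotopic_with_compose_continuous_map_right[OF h1 cont_phi[OF k]]) simp
  have hff': "homotopic_with (\<lambda>x. True) (nsphere ?K) (nsphere ?K) f f'"
  proof (rule homotopic_with_eq[OF h2])
    fix x assume x: "x \<in> topspace (nsphere ?K)"
    show "f x = (psi ?K \<circ> F \<circ> phi ?K) x"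
      using psi_phi[OF x k] psi_phi[OF fts[OF x] k] by (simp add: F_def)
  qed auto
  have deq: "Brouwer_degree2 ?K f = Brouwer_degree2 ?K f'"
    by (rule Brouwer_degree2_homotopic[OF hff'])
  have cf': "continuous_map (nsphere ?K) (nsphere ?K) f'"
    using homotopic_with_imp_continuous_maps[OF hff'] by blast
  have oddf': "f' (\<lambda>i. - u i) = (\<lambda>i. - f' u i)" if "u \<in> topspace (nsphere ?K)" for u
    using Godd[OF phi_sphere[OF that k]] by (simp add: f'_def phi_neg psi_neg)
  have eqt: "topspace (nsphere k) = topspace (nsphere ?K) \<inter> {x. x ?K = 0}"
    by (metis subtopology_nsphere_equator topspace_subtopology)
  have f'eq: "f' u \<in> topspace (nsphere k)" if u: "u \<in> topspace (nsphere k)" for u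
  proof -
    have u1: "u \<in> topspace (nsphere ?K)" and u2: "u ?K = 0" using u eqt by auto
    have "phi ?K u \<in> VV k"
    proof -
      have "\<forall>i>?K. u i = 0" using u1 by (simp add: nsphere)
      then show ?thesis using u2 k by (auto simp: VV_def phi_def inner_sum_b[OF atMost_sub] Suc_lessI)
    qed
    then have "phi ?K u \<in> ?SS" using phi_sphere[OF u1 k] by auto
    then have "G (phi ?K u) \<in> VV k" "G (phi ?K u) \<in> ?ST" using GS Gim STsub by auto
    then have "f' u \<in> topspace (nsphere ?K)" "f' u ?K = 0"
      using psi_sphere[OF _ k] eS by (auto simp: f'_def psi_def)
    then show ?thesis using eqt by auto
  qed
  have st: "even (Brouwer_degree2 ?K f' - Brouwer_degree2 (?K - Suc 0) f')"
    by (rule Borsuk_odd_mapping_degree_step[OF cf']) (use oddf' f'eq in auto)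
  have cfk: "continuous_map (nsphere k) (nsphere k) f'"
  proof -
    have "continuous_map (subtopology (nsphere ?K) {x. x ?K = 0}) (nsphere ?K) f'"
      by (rule continuous_map_from_subtopology[OF cf'])
    then have "continuous_map (nsphere k) (nsphere ?K) f'"
      by (simp add: subtopology_nsphere_equator)
    then show ?thesis
      using f'eq by (subst (2) subtopology_nsphere_equator[symmetric])
                    (auto simp: continuous_map_in_subtopology eqt)
  qed
  have "odd (Brouwer_degree2 k f')"
    by (rule IH[OF cfk]) (use oddf' eqt in auto)
  then show ?thesis using st deq by simp
qed

lemma borsuk_deg:
  "k < DIM('a) \<Longrightarrow> continuous_map (nsphere k) (nsphere k) f \<Longrightarrow>
   (\<forall>u\<in>topspace (nsphere k). f (\<lambda>i. - u i) = (\<lambda>i. - f u i)) \<Longrightarrow> odd (Brouwer_degree2 k f)"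
proof (induction k arbitrary: f)
  case 0
  then show ?case using borsuk_deg0 by blast
next
  case (Suc k)
  show ?case
    by (rule borsuk_deg_step[OF Suc.prems(1) _ Suc.prems(2,3)]) (use Suc.IH Suc.prems(1) in auto)
qed

end

context bbasis
begin

lemma no_odd_map:
  fixes h :: "'a \<Rightarrow> 'a"
  assumes ch: "continuous_on (sphere 0 1) h"
    and hodd: "\<And>x. x \<in> sphere 0 1 \<Longrightarrow> h (-x) = - h x"
    and hnz: "\<And>x. x \<in> sphere 0 1 \<Longrightarrow> h x \<noteq> 0"
    and hb: "\<And>x. x \<in> sphere 0 1 \<Longrightarrow> h x \<bullet> b (DIM('a) - 1) = 0"
  shows False
proof -
  define n where "n = DIM('a) - 1"
  have n: "n < DIM('a)" by (simp add: n_def)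
  have Vn: "VV n = UNIV" by (auto simp: VV_def n_def)
  define G where "G x = h x /\<^sub>R norm (h x)" for x
  have cG: "continuous_on (sphere 0 1) G"
    unfolding G_def using hnz by (intro continuous_intros ch) auto
  have Gim: "G x \<in> sphere 0 1" if "x \<in> sphere 0 1" for x using hnz[OF that] by (simp add: G_def)
  have cGm: "continuous_map (top_of_set (sphere 0 1 \<inter> VV n)) (top_of_set (sphere 0 1 \<inter> VV n)) G"
    using cG Gim by (simp add: Vn continuous_map_in_subtopology)
  define g where "g = psi n \<circ> G \<circ> phi n"
  have cg: "continuous_map (nsphere n) (nsphere n) g"
    unfolding g_def using continuous_map_compose[OF continuous_map_compose[OF cont_phi[OF n] cGm] cont_psi[OF n]]
    by (simp add: o_assoc)
  have godd: "\<forall>u\<in>topspace (nsphere n). g (\<lambda>i. - u i) = (\<lambda>i. - g u i)"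
  proof
    fix u assume "u \<in> topspace (nsphere n)"
    then have "phi n u \<in> sphere 0 1" using phi_sphere[OF _ n] by auto
    then show "g (\<lambda>i. - u i) = (\<lambda>i. - g u i)"
      by (simp add: g_def phi_neg G_def hodd psi_neg)
  qed
  have "odd (Brouwer_degree2 n g)" by (rule borsuk_deg[OF n cg godd])
  moreover have "Brouwer_degree2 n g = 0"
  proof (rule Brouwer_degree2_nonsurjective[OF cg])
    define en where "en = (\<lambda>i::nat. if i = n then 1 else (0::real))"
    have sq: "(\<lambda>i. (en i)\<^sup>2) = en" by (auto simp: en_def)
    have "(\<Sum>i\<le>n. (en i)\<^sup>2) = (\<Sum>i\<le>n. en i)" using sq by metis
    also have "\<dots> = 1" by (simp add: en_def)
    finally have ent: "en \<in> topspace (nsphere n)" by (simp add: nsphere en_def)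
    have "en \<notin> g ` topspace (nsphere n)"
    proof
      assume "en \<in> g ` topspace (nsphere n)"
      then obtain u where u: "u \<in> topspace (nsphere n)" "en = g u" by blast
      then have "phi n u \<in> sphere 0 1" using phi_sphere[OF _ n] by auto
      then have "g u n = 0" using hb by (simp add: g_def psi_def G_def n_def)
      moreover have "en n = 1" by (simp add: en_def)
      ultimately show False using u(2) by simp
    qed
    then show "g ` topspace (nsphere n) \<noteq> topspace (nsphere n)" using ent by blast
  qed
  ultimately show False by simp
qed

lemma LS_cover:
  fixes U :: "nat \<Rightarrow> 'a set"
  assumes op: "\<And>i. i < DIM('a) \<Longrightarrow> open (U i)"
    and cov: "\<And>x. x \<in> sphere 0 1 \<Longrightarrow> \<exists>i<DIM('a). x \<in> U i"
    and anti: "\<And>i x. i < DIM('a) \<Longrightarrow> x \<in> sphere 0 1 \<Longrightarrow> x \<in> U i \<Longrightarrow> -x \<notin> U i"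
  shows False
proof -
  define n where "n = DIM('a) - 1"
  have n: "n < DIM('a)" by (simp add: n_def)
  have nonall: "- U i \<noteq> {}" if "i < DIM('a)" for i
  proof
    assume "- U i = {}"
    then have "U i = UNIV" by auto
    moreover obtain x :: 'a where "x \<in> sphere 0 1"
      using n bB[OF n] by (metis norm_Basis mem_sphere_0)
    ultimately show False using anti[OF that] by auto
  qed
  define \<rho> where "\<rho> i x = infdist x (- U i)" for i x
  have \<rho>pos: "\<rho> i x > 0 \<longleftrightarrow> x \<in> U i" if "i < DIM('a)" for i x
  proof
    assume "\<rho> i x > 0" then show "x \<in> U i"
      by (rule contrapos_pp) (simp add: \<rho>_def)
  next
    assume "x \<in> U i"
    then show "\<rho> i x > 0" unfolding \<rho>_def
      using op[OF that] nonall[OF that] by (intro infdist_pos_not_in_closed) auto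
  qed
  define h where "h x = (\<Sum>i<n. (\<rho> i x - \<rho> i (-x)) *\<^sub>R b i)" for x
  have ch: "continuous_on (sphere 0 1) h"
    unfolding h_def \<rho>_def by (intro continuous_intros)
  have hodd: "h (-x) = - h x" for x
    by (simp add: h_def sum_negf[symmetric] algebra_simps)
  have hcoef: "h x \<bullet> b j = (if j < n then \<rho> j x - \<rho> j (-x) else 0)" if "j < DIM('a)" for x j
    unfolding h_def using inner_sum_b[of "{..<n}" j, OF _ that] n by (auto simp: n_def)
  have hb: "h x \<bullet> b (DIM('a) - 1) = 0" for x using hcoef[OF n] by (simp add: n_def)
  have hnz: "h x \<noteq> 0" if x: "x \<in> sphere 0 1" for x
  proof
    assume h0: "h x = 0"
    have eq: "\<rho> j x = \<rho> j (-x)" if "j < n" for j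
      using hcoef[of j x] h0 that n by simp
    have mx: "-x \<in> sphere 0 1" using x by simp
    obtain i where i: "i < DIM('a)" "x \<in> U i" using cov[OF x] by blast
    obtain j where j: "j < DIM('a)" "-x \<in> U j" using cov[OF mx] by blast
    show False
    proof (cases "i < n")
      case True
      have "\<rho> i x > 0" using \<rho>pos[OF i(1)] i(2) by blast
      then have "\<rho> i (-x) > 0" using eq[OF True] by simp
      then show False using \<rho>pos[OF i(1)] anti[OF i(1) x i(2)] by blast
    next
      case False
      show False
      proof (cases "j < n")
        case True
        have "\<rho> j (-x) > 0" using \<rho>pos[OF j(1)] j(2) by blast
        then have "\<rho> j x > 0" using eq[OF True] by simp
        then show False using \<rho>pos[OF j(1)] anti[OF j(1) mx] j(2) by auto
      next
        case False
        then have "i = j" using \<open>\<not> i < n\<close> i(1) j(1) by (simp add: n_def)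
        then show False using anti[OF i(1) x i(2)] j(2) by simp
      qed
    qed
  qed
  show False by (rule no_odd_map[OF ch _ hnz hb]) (simp add: hodd)
qed

end

lemma vertices_finite: "polytope P \<Longrightarrow> finite (vertices_of P)"
  unfolding vertices_of_def by (simp add: finite_polyhedron_extreme_points polytope_imp_polyhedron)

lemma polytope_hull_vertices: "polytope P \<Longrightarrow> P = convex hull (vertices_of P)"
  unfolding vertices_of_def polytope_def using Krein_Milman_polytope by blast

lemma vertex_in_facet:
  fixes P :: "'a::euclidean_space set"
  assumes "polytope P" "aff_dim P = int DIM('a)" "v \<in> vertices_of P"
  obtains f where "f facet_of P" "v \<in> f"
proof -
  have "{v} face_of P" using assms(3) by (simp add: vertices_of_def face_of_singleton)
  moreover have "{v} \<noteq> P"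
  proof
    assume "{v} = P"
    then have "aff_dim P = 0" by auto
    then show False using assms(2) DIM_positive[where 'a='a] by simp
  qed
  ultimately obtain f where "f facet_of P" "{v} \<subseteq> f"
    using face_of_polyhedron_subset_facet[OF polytope_imp_polyhedron[OF assms(1)]] by blast
  then show ?thesis using that by blast
qed

lemma facet_has_vertex:
  fixes P :: "'a::euclidean_space set"
  assumes "polytope P" "f facet_of P"
  shows "\<exists>v\<in>vertices_of P. v \<in> f"
proof -
  have ff: "f face_of P" "f \<noteq> {}" using assms(2) by (auto simp: facet_of_def)
  have "polytope f" using face_of_polytope_polytope[OF assms(1) ff(1)] .
  then obtain v where "v extreme_point_of f"
    using extreme_point_exists_convex[OF polytope_imp_compact polytope_imp_convex ff(2)] by blast
  then show ?thesis using extreme_point_of_face[OF ff(1)] by (auto simp: vertices_of_def)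
qed

lemma normal_unique:
  fixes P :: "'a::euclidean_space set"
  assumes full: "aff_dim P = int DIM('a)" and f: "f facet_of P"
    and n: "n \<noteq> 0" "P \<subseteq> {x. n \<bullet> x \<le> \<beta>}" "f = P \<inter> {x. n \<bullet> x = \<beta>}"
    and a: "a \<noteq> 0" "P \<subseteq> {x. a \<bullet> x \<le> \<gamma>}" "f = P \<inter> {x. a \<bullet> x = \<gamma>}"
  shows "\<exists>\<mu>>0. n = \<mu> *\<^sub>R a"
proof -
  have fne: "f \<noteq> {}" and fdim: "aff_dim f = int DIM('a) - 1" using f full by (auto simp: facet_of_def)
  have hull_eq: "affine hull f = {x. c \<bullet> x = r}" if "c \<noteq> 0" "f \<subseteq> {x. c \<bullet> x = r}" for c r
  proof -
    have "affine hull f \<subseteq> {x. c \<bullet> x = r}"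
      using that(2) by (simp add: hull_minimal affine_hyperplane)
    moreover have "\<not> affine hull f \<subset> {x. c \<bullet> x = r}"
    proof
      assume A: "affine hull f \<subset> {x. c \<bullet> x = r}"
      have e: "affine hull {x. c \<bullet> x = r} = {x. c \<bullet> x = r}"
        by (rule affine_hull_eq[THEN iffD2, OF affine_hyperplane])
      have "affine hull f \<subset> affine hull {x. c \<bullet> x = r}" unfolding e by (rule A)
      then have "aff_dim f < aff_dim {x. c \<bullet> x = r}" by (rule aff_dim_psubset)
      then show False using fdim that(1) by simp
    qed
    ultimately show ?thesis by blast
  qed
  have Heq: "{x. n \<bullet> x = \<beta>} = {x. a \<bullet> x = \<gamma>}"
    using hull_eq[OF n(1), of \<beta>] hull_eq[OF a(1), of \<gamma>] n(3) a(3) by auto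
  obtain x0 where x0: "x0 \<in> f" using fne by blast
  then have x0n: "n \<bullet> x0 = \<beta>" and x0a: "a \<bullet> x0 = \<gamma>" using n(3) a(3) by auto
  have perp: "n \<bullet> y = 0" if "a \<bullet> y = 0" for y
  proof -
    have "x0 + y \<in> {x. a \<bullet> x = \<gamma>}" using x0a that by (simp add: inner_add_right)
    then have "n \<bullet> (x0 + y) = \<beta>" using Heq by auto
    then show ?thesis using x0n by (simp add: inner_add_right)
  qed
  define \<mu> where "\<mu> = (n \<bullet> a) / (a \<bullet> a)"
  have aa: "a \<bullet> a \<noteq> 0" using a(1) by simp
  define w where "w = n - \<mu> *\<^sub>R a"
  have "a \<bullet> w = 0" using aa by (simp add: w_def \<mu>_def inner_diff_right inner_commute)
  then have "n \<bullet> w = 0" by (rule perp)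
  then have "w \<bullet> w = 0"
    using \<open>a \<bullet> w = 0\<close> by (simp add: w_def inner_diff_left)
  then have w0: "w = 0" by simp
  then have neq: "n = \<mu> *\<^sub>R a" by (simp add: w_def)
  have "\<not> P \<subseteq> {x. a \<bullet> x = \<gamma>}"
  proof
    assume "P \<subseteq> {x. a \<bullet> x = \<gamma>}"
    then have "aff_dim P \<le> aff_dim {x. a \<bullet> x = \<gamma>}" by (rule aff_dim_subset)
    then show False using full a(1) by simp
  qed
  then obtain p where p: "p \<in> P" "a \<bullet> p \<noteq> \<gamma>" by blast
  then have ap: "a \<bullet> p < \<gamma>" using a(2) by force
  have "n \<bullet> p \<le> \<beta>" using p(1) n(2) by auto
  then have "\<mu> * (a \<bullet> p) \<le> \<mu> * \<gamma>" using neq x0n x0a by simp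
  then have "\<mu> \<ge> 0" using ap by (smt (verit) mult_less_cancel_left)
  moreover have "\<mu> \<noteq> 0" using neq n(1) by auto
  ultimately have "\<mu> > 0" by simp
  then show ?thesis using neq by blast
qed


lemma finite_cone_repr:
  fixes S :: "'a::euclidean_space set"
  assumes "finite S" "z \<in> convex_cone hull S"
  shows "\<exists>c. (\<forall>s\<in>S. c s \<ge> 0) \<and> z = (\<Sum>s\<in>S. c s *\<^sub>R s)"
proof -
  define C where "C = {y. \<exists>c. (\<forall>s\<in>S. c s \<ge> 0) \<and> y = (\<Sum>s\<in>S. c s *\<^sub>R s)}"
  have "convex_cone C"
    unfolding convex_cone_iff
  proof (intro conjI ballI allI impI)
    show "0 \<in> C" unfolding C_def by (rule CollectI, rule exI[of _ "\<lambda>s. 0"]) simp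
  next
    fix x y assume "x \<in> C" "y \<in> C"
    then obtain c1 c2 where "\<forall>s\<in>S. c1 s \<ge> 0" "x = (\<Sum>s\<in>S. c1 s *\<^sub>R s)"
      "\<forall>s\<in>S. c2 s \<ge> 0" "y = (\<Sum>s\<in>S. c2 s *\<^sub>R s)" by (auto simp: C_def)
    then show "x + y \<in> C" unfolding C_def
      by (intro CollectI exI[of _ "\<lambda>s. c1 s + c2 s"]) (simp add: scaleR_add_left sum.distrib)
  next
    fix x and t :: real assume "x \<in> C" "0 \<le> t"
    then obtain c1 where "\<forall>s\<in>S. c1 s \<ge> 0" "x = (\<Sum>s\<in>S. c1 s *\<^sub>R s)" by (auto simp: C_def)
    then show "t *\<^sub>R x \<in> C" unfolding C_def using \<open>0 \<le> t\<close>
      by (intro CollectI exI[of _ "\<lambda>s. t * c1 s"]) (simp add: scaleR_sum_right)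
  qed
  moreover have "S \<subseteq> C"
  proof
    fix s0 assume "s0 \<in> S"
    then show "s0 \<in> C" unfolding C_def using assms(1)
      by (intro CollectI exI[of _ "\<lambda>s. if s = s0 then 1 else 0"]) (simp add: if_distrib[where f="\<lambda>c. c *\<^sub>R _"] cong: if_cong)
  qed
  ultimately have "convex_cone hull S \<subseteq> C" by (rule hull_minimal[rotated])
  then show ?thesis using assms(2) by (auto simp: C_def)
qed

lemma normal_cone:
  fixes P :: "'a::euclidean_space set" and N :: "'a set \<Rightarrow> 'a"
  assumes poly: "polytope P" and full: "aff_dim P = int DIM('a)"
    and N: "\<And>f. f facet_of P \<Longrightarrow> outward_normal P f (N f)" and a: "a \<noteq> 0"
  shows "\<exists>v\<in>vertices_of P. \<exists>(T::'a set) fh c. finite T \<and> (\<forall>h\<in>T. fh h facet_of P \<and> v \<in> fh h \<and> c h \<ge> 0)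
            \<and> a = (\<Sum>h\<in>T. c h *\<^sub>R N (fh h))"
proof -
  define V where "V = vertices_of P"
  have Vfin: "finite V" using vertices_finite[OF poly] by (simp add: V_def)
  have PV: "P = convex hull V" using polytope_hull_vertices[OF poly] by (simp add: V_def)
  have "P \<noteq> {}"
  proof
    assume "P = {}" then show False using full by simp
  qed
  then have Vne: "V \<noteq> {}" using PV by (metis convex_hull_empty)
  define M where "M = Max ((\<lambda>w. a \<bullet> w) ` V)"
  have "M \<in> (\<lambda>w. a \<bullet> w) ` V" unfolding M_def using Vfin Vne by (intro Max_in) auto
  then obtain v where v: "v \<in> V" "a \<bullet> v = M" by auto
  have "V \<subseteq> {x. a \<bullet> x \<le> a \<bullet> v}"
  proof
    fix w assume "w \<in> V"
    then have "a \<bullet> w \<le> M" unfolding M_def using Vfin by (intro Max_ge) auto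
    then show "w \<in> {x. a \<bullet> x \<le> a \<bullet> v}" using v(2) by simp
  qed
  then have "convex hull V \<subseteq> {x. a \<bullet> x \<le> a \<bullet> v}" by (rule hull_minimal) (rule convex_halfspace_le)
  then have "P \<subseteq> {x. a \<bullet> x \<le> a \<bullet> v}" using PV by simp
  then have amax: "\<And>x. x \<in> P \<Longrightarrow> a \<bullet> x \<le> a \<bullet> v" by blast
  have vP: "v \<in> P" by (subst PV) (rule hull_inc[OF v(1)])
  have ph: "polyhedron P" using poly by (simp add: polytope_imp_polyhedron)
  obtain F where "finite F" and seq: "P = affine hull P \<inter> \<Inter>F"
             and faces: "\<And>h. h \<in> F \<Longrightarrow> \<exists>a b. a \<noteq> 0 \<and> h = {x. a \<bullet> x \<le> b}"
             and min: "\<And>F'. F' \<subset> F \<Longrightarrow> P \<subset> (affine hull P) \<inter> \<Inter>F'"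
    using ph by (simp add: polyhedron_Int_affine_minimal) meson
  then obtain ah bh where ab: "\<And>h. h \<in> F \<Longrightarrow> ah h \<noteq> 0 \<and> h = {x. ah h \<bullet> x \<le> bh h}"
    by metis
  have ahull: "affine hull P = UNIV" using full aff_dim_eq_full by blast
  have PF: "P = \<Inter>F" using seq ahull by simp
  have facet: "P \<inter> {x. ah h \<bullet> x = bh h} facet_of P" if "h \<in> F" for h
    using facet_of_polyhedron_explicit[OF \<open>finite F\<close> seq ab min] that by blast
  have hmem: "x \<in> h \<longleftrightarrow> ah h \<bullet> x \<le> bh h" if hF: "h \<in> F" for h x
  proof -
    obtain A where A: "A = ah h" "h = {x. A \<bullet> x \<le> bh h}" using ab[OF hF] by blast
    show ?thesis by (subst A(2)) (simp add: A(1))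
  qed
  have Pin: "P \<subseteq> {x. ah h \<bullet> x \<le> bh h}" if "h \<in> F" for h
  proof -
    have "\<Inter>F \<subseteq> h" using that by (rule Inter_lower)
    then show ?thesis using hmem[OF that] PF by auto
  qed
  define Tv where "Tv = {h\<in>F. ah h \<bullet> v = bh h}"
  define S where "S = ah ` Tv"
  have Sfin: "finite S" using \<open>finite F\<close> by (simp add: S_def Tv_def)
  have aC: "a \<in> convex_cone hull S"
  proof (rule ccontr)
    assume anot: "a \<notin> convex_cone hull S"
    have cC: "closed (convex_cone hull S)"
      by (rule polyhedron_imp_closed[OF polyhedron_convex_cone_hull[OF Sfin]])
    have vC: "convex (convex_cone hull S)"
      using convex_cone_convex_cone_hull[of S] unfolding convex_cone_def by blast
    obtain y \<beta> where y: "y \<bullet> a < \<beta>" "\<And>z. z \<in> convex_cone hull S \<Longrightarrow> \<beta> < y \<bullet> z"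
      using separating_hyperplane_closed_point[OF vC cC anot] by blast
    have b0: "\<beta> < 0" using y(2)[OF convex_cone_hull_contains_0] by simp
    have ynn: "y \<bullet> z \<ge> 0" if "z \<in> convex_cone hull S" for z
    proof (rule ccontr)
      assume "\<not> y \<bullet> z \<ge> 0"
      then have neg: "y \<bullet> z < 0" by simp
      define t where "t = 2 * \<beta> / (y \<bullet> z)"
      have t: "t \<ge> 0" using neg b0 by (simp add: t_def divide_nonpos_neg)
      have "t *\<^sub>R z \<in> convex_cone hull S" by (rule convex_cone_hull_mul[OF that t])
      then have "\<beta> < y \<bullet> (t *\<^sub>R z)" by (rule y(2))
      also have "y \<bullet> (t *\<^sub>R z) = 2 * \<beta>" using neg by (simp add: t_def)
      finally show False using b0 by simp
    qed
    define w where "w = - y"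
    have aw: "a \<bullet> w > 0" using y(1) b0 by (simp add: w_def inner_commute)
    have tw: "ah h \<bullet> w \<le> 0" if "h \<in> Tv" for h
    proof -
      have "ah h \<in> convex_cone hull S" using that by (auto simp: S_def intro: hull_inc)
      then have "y \<bullet> ah h \<ge> 0" by (rule ynn)
      then show ?thesis by (simp add: w_def inner_commute)
    qed
    define Onb where "Onb = (\<Inter>h\<in>F - Tv. {x. ah h \<bullet> x < bh h})"
    have oO: "open Onb" unfolding Onb_def using \<open>finite F\<close> by (intro open_INT) (auto simp: open_halfspace_lt)
    have vO: "v \<in> Onb"
    proof -
      have "ah h \<bullet> v < bh h" if "h \<in> F - Tv" for h
      proof -
        have "ah h \<bullet> v \<le> bh h" using Pin[of h] vP that by auto
        moreover have "ah h \<bullet> v \<noteq> bh h" using that by (auto simp: Tv_def)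
        ultimately show ?thesis by simp
      qed
      then show ?thesis by (auto simp: Onb_def)
    qed
    obtain r where r: "r > 0" "ball v r \<subseteq> Onb" using oO vO open_contains_ball by blast
    define \<epsilon> where "\<epsilon> = r / (2 * (norm w + 1))"
    have npos: "2 * (norm w + 1) > 0" using norm_ge_zero[of w] by (smt (verit))
    then have \<epsilon>: "\<epsilon> > 0" using r(1) unfolding \<epsilon>_def by (rule divide_pos_pos[rotated])
    define z where "z = v + \<epsilon> *\<^sub>R w"
    have "dist v z = \<epsilon> * norm w" using \<epsilon> by (simp add: z_def dist_norm)
    also have "\<dots> < r"
    proof -
      have "\<epsilon> * norm w \<le> \<epsilon> * (norm w + 1)" using \<epsilon> by simp
      also have "\<dots> = r / 2" using npos by (simp add: \<epsilon>_def field_simps)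
      finally show ?thesis using r(1) by simp
    qed
    finally have zO: "z \<in> Onb" using r(2) by auto
    have "z \<in> P"
    proof -
      have "z \<in> h" if h: "h \<in> F" for h
      proof (cases "h \<in> Tv")
        case True
        then have "ah h \<bullet> z = bh h + \<epsilon> * (ah h \<bullet> w)" by (simp add: z_def Tv_def inner_add_right)
        moreover have "\<epsilon> * (ah h \<bullet> w) \<le> 0" using tw[OF True] \<epsilon> by (simp add: mult_nonneg_nonpos)
        ultimately show ?thesis using hmem[OF h] by auto
      next
        case False
        then have "ah h \<bullet> z < bh h" using zO h by (auto simp: Onb_def)
        then show ?thesis using hmem[OF h] by auto
      qed
      then have "z \<in> \<Inter>F" by blast
      then show ?thesis using PF by simp
    qed
    moreover have "a \<bullet> z > a \<bullet> v" using aw \<epsilon> by (simp add: z_def inner_add_right)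
    ultimately show False using amax by (meson not_le)
  qed
  obtain c where c: "\<forall>s\<in>S. c s \<ge> 0" "a = (\<Sum>s\<in>S. c s *\<^sub>R s)"
    using finite_cone_repr[OF Sfin aC] by blast
  define rep where "rep s = (SOME h. h \<in> Tv \<and> ah h = s)" for s
  have rep: "rep s \<in> Tv \<and> ah (rep s) = s" if "s \<in> S" for s
    unfolding rep_def by (rule someI_ex) (use that in \<open>auto simp: S_def\<close>)
  define fh where "fh s = P \<inter> {x. ah (rep s) \<bullet> x = bh (rep s)}" for s
  have fhf: "fh s facet_of P" "v \<in> fh s" if "s \<in> S" for s
    using facet[of "rep s"] rep[OF that] vP by (auto simp: fh_def Tv_def)
  have "\<forall>s\<in>S. \<exists>\<mu>>0. N (fh s) = \<mu> *\<^sub>R s"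
  proof
    fix s assume s: "s \<in> S"
    obtain \<beta> where n: "N (fh s) \<noteq> 0" "P \<subseteq> {x. N (fh s) \<bullet> x \<le> \<beta>}" "fh s = P \<inter> {x. N (fh s) \<bullet> x = \<beta>}"
      using N[OF fhf(1)[OF s]] by (auto simp: outward_normal_def)
    have rF: "rep s \<in> F" using rep[OF s] by (simp add: Tv_def)
    show "\<exists>\<mu>>0. N (fh s) = \<mu> *\<^sub>R s"
      using normal_unique[OF full fhf(1)[OF s] n ab[OF rF, THEN conjunct1] Pin[OF rF]] rep[OF s]
      by (simp add: fh_def)
  qed
  from bchoice[OF this] obtain \<mu> where \<mu>: "\<And>s. s \<in> S \<Longrightarrow> \<mu> s > 0 \<and> N (fh s) = \<mu> s *\<^sub>R s" by blast
  have "a = (\<Sum>s\<in>S. (c s / \<mu> s) *\<^sub>R N (fh s))"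
    unfolding c(2)
  proof (rule sum.cong[OF refl])
    fix s assume "s \<in> S"
    then show "c s *\<^sub>R s = (c s / \<mu> s) *\<^sub>R N (fh s)" using \<mu>[of s] by simp
  qed
  moreover have "\<forall>s\<in>S. fh s facet_of P \<and> v \<in> fh s \<and> c s / \<mu> s \<ge> 0"
    using fhf c(1) \<mu> by (auto intro: divide_nonneg_pos)
  ultimately have conj: "finite S \<and> (\<forall>h\<in>S. fh h facet_of P \<and> v \<in> fh h \<and> c h / \<mu> h \<ge> 0)
            \<and> a = (\<Sum>h\<in>S. (c h / \<mu> h) *\<^sub>R N (fh h))" using Sfin by (intro conjI)
  have "\<exists>(T::'a set) fh c. finite T \<and> (\<forall>h\<in>T. fh h facet_of P \<and> v \<in> fh h \<and> c h \<ge> 0)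
            \<and> a = (\<Sum>h\<in>T. c h *\<^sub>R N (fh h))"
    apply (rule exI[where x=S], rule exI[where x=fh], rule exI[where x="\<lambda>h. c h / \<mu> h"])
    using conj by simp
  moreover have "v \<in> vertices_of P" using v(1) by (simp add: V_def)
  ultimately show ?thesis by blast
qed


lemma LS_cover_global:
  fixes U :: "nat \<Rightarrow> 'a::euclidean_space set"
  assumes op: "\<And>i. i < DIM('a) \<Longrightarrow> open (U i)"
    and cov: "\<And>x. x \<in> sphere 0 1 \<Longrightarrow> \<exists>i<DIM('a). x \<in> U i"
    and anti: "\<And>i x. i < DIM('a) \<Longrightarrow> x \<in> sphere 0 1 \<Longrightarrow> x \<in> U i \<Longrightarrow> -x \<notin> U i"
  shows False
proof -
  obtain b :: "nat \<Rightarrow> 'a" where "bij_betw b {0..<card (Basis::'a set)} Basis"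
    using ex_bij_betw_nat_finite[OF finite_Basis] by blast
  then have "bij_betw b {..<DIM('a)} Basis" by (simp add: atLeast0LessThan)
  then interpret bbasis b by (unfold_locales)
  show False by (rule LS_cover[OF op cov anti])
qed

lemma i_ii:
  fixes N :: "'a set \<Rightarrow> 'a::euclidean_space" and B :: "'a \<Rightarrow> 'a \<Rightarrow> real"
  assumes "bilinear B"
  shows "inner y (\<Sum>u\<in>Basis. B u z *\<^sub>R u) = B y z"
proof -
  have lin: "linear (\<lambda>x. B x z)" using assms by (simp add: bilinear_def)
  have "inner y (\<Sum>u\<in>Basis. B u z *\<^sub>R u) = (\<Sum>u\<in>Basis. (y \<bullet> u) * B u z)"
    by (simp add: inner_sum_right mult.commute)
  also have "\<dots> = B (\<Sum>u\<in>Basis. (y \<bullet> u) *\<^sub>R u) z"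
    by (simp add: linear_sum[OF lin] linear_scale[OF lin] o_def)
  also have "\<dots> = B y z" by (simp add: euclidean_representation)
  finally show ?thesis .
qed


theorem lemma2p2:
  fixes P :: "'a::euclidean_space set"
    and N :: "'a set \<Rightarrow> 'a"
  assumes "polytope P"
    and "aff_dim P = int DIM('a)"
    and "\<And>f. f facet_of P \<Longrightarrow> outward_normal P f (N f)"
  defines "cond_i \<equiv> (\<exists>B :: 'a \<Rightarrow> 'a \<Rightarrow> real. bilinear B \<and>
              (\<forall>f1 f2. f1 facet_of P \<and> f2 facet_of P \<and> share_vertex P f1 f2
                 \<longrightarrow> B (N f1) (N f2) > 0))"
    and "cond_ii \<equiv> (\<exists>x :: 'a set \<Rightarrow> 'a.
              (\<forall>f1 f2. f1 facet_of P \<and> f2 facet_of P \<and> share_vertex P f1 f2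
                 \<longrightarrow> inner (N f1) (x f2) > 0))"
    and "cond_iii \<equiv> (\<exists>u :: 'a set \<Rightarrow> 'a.
              (\<forall>f. f facet_of P \<longrightarrow> u f \<in> sphere 0 1) \<and>
              (\<forall>H. open_hemisphere H \<longrightarrow>
                 (\<exists>v \<in> vertices_of P. \<forall>f. f facet_of P \<and> v \<in> f \<longrightarrow> u f \<in> H)))"
    and "cond_iv \<equiv> chromatic_number (vertices_of P) (kneser_adj P) \<ge> DIM('a) + 1"
  shows "(cond_i \<longrightarrow> cond_ii) \<and> (cond_ii \<longrightarrow> cond_iii) \<and> (cond_iii \<longrightarrow> cond_iv)"
proof -
  note poly = assms(1) and full = assms(2) and N = assms(3)
  have c12: "cond_i \<longrightarrow> cond_ii"
  proof
    assume cond_i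
    then obtain B :: "'a \<Rightarrow> 'a \<Rightarrow> real" where B: "bilinear B"
      "\<forall>f1 f2. f1 facet_of P \<and> f2 facet_of P \<and> share_vertex P f1 f2 \<longrightarrow> B (N f1) (N f2) > 0"
      unfolding cond_i_def by blast
    show cond_ii unfolding cond_ii_def
      by (rule exI[where x="\<lambda>f. \<Sum>u\<in>Basis. B u (N f) *\<^sub>R u"]) (simp add: i_ii[OF B(1)] B(2))
  qed
  have c23: "cond_ii \<longrightarrow> cond_iii"
  proof
    assume cond_ii
    then obtain x :: "'a set \<Rightarrow> 'a" where x:
      "\<And>f1 f2. f1 facet_of P \<Longrightarrow> f2 facet_of P \<Longrightarrow> share_vertex P f1 f2 \<Longrightarrow> inner (N f1) (x f2) > 0"
      unfolding cond_ii_def by blast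
    have xnz: "x f \<noteq> 0" if f: "f facet_of P" for f
    proof -
      obtain v where "v \<in> vertices_of P" "v \<in> f" using facet_has_vertex[OF poly f] by blast
      then have "share_vertex P f f" by (auto simp: share_vertex_def)
      then show ?thesis using x[OF f f] by auto
    qed
    define u where "u f = x f /\<^sub>R norm (x f)" for f
    have usph: "\<forall>f. f facet_of P \<longrightarrow> u f \<in> sphere 0 1" using xnz by (simp add: u_def)
    have hem: "\<exists>v \<in> vertices_of P. \<forall>f. f facet_of P \<and> v \<in> f \<longrightarrow> u f \<in> H" if H: "open_hemisphere H" for H
    proof -
      obtain a where a: "a \<noteq> 0" "H = {w \<in> sphere 0 1. inner a w > 0}"
        using H by (auto simp: open_hemisphere_def)
      obtain v T fh c where v: "v \<in> vertices_of P" and T: "finite (T::'a set)"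
        and Tf: "\<forall>h\<in>T. fh h facet_of P \<and> v \<in> fh h \<and> c h \<ge> 0"
        and aeq: "a = (\<Sum>h\<in>T. c h *\<^sub>R N (fh h))"
        using normal_cone[OF poly full N a(1)] by blast
      have "u g \<in> H" if g: "g facet_of P" "v \<in> g" for g
      proof -
        have sh: "share_vertex P (fh h) g" if "h \<in> T" for h
          using Tf that v g(2) by (auto simp: share_vertex_def)
        have terms: "c h * (N (fh h) \<bullet> x g) \<ge> 0" if "h \<in> T" for h
          using Tf that x[OF _ g(1) sh[OF that]] by (simp add: less_imp_le)
        obtain h0 where h0: "h0 \<in> T" "c h0 \<noteq> 0"
        proof (rule ccontr)
          assume "\<not> thesis"
          then have "\<forall>h\<in>T. c h = 0" using that by blast
          then have "a = 0" using aeq by simp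
          then show False using a(1) by simp
        qed
        have "c h0 \<ge> 0" using Tf h0(1) by blast
        then have "c h0 > 0" using h0(2) by simp
        moreover have "N (fh h0) \<bullet> x g > 0" using Tf h0 x[OF _ g(1) sh[OF h0(1)]] by simp
        ultimately have "c h0 * (N (fh h0) \<bullet> x g) > 0" by simp
        then have "(\<Sum>h\<in>T. c h * (N (fh h) \<bullet> x g)) > 0"
          by (intro sum_pos2[OF T h0(1)]) (auto intro: terms)
        moreover have "a \<bullet> x g = (\<Sum>h\<in>T. c h * (N (fh h) \<bullet> x g))"
          unfolding aeq by (simp add: inner_sum_left)
        ultimately have "a \<bullet> x g > 0" by simp
        then have "a \<bullet> u g > 0" using xnz[OF g(1)] by (simp add: u_def)
        then show ?thesis using a(2) usph g(1) by auto
      qed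
      then show ?thesis using v by blast
    qed
    show cond_iii unfolding cond_iii_def using usph hem by blast
  qed
  have c34: "cond_iii \<longrightarrow> cond_iv"
  proof
    assume cond_iii
    then obtain u :: "'a set \<Rightarrow> 'a" where usph: "\<And>f. f facet_of P \<Longrightarrow> u f \<in> sphere 0 1"
      and hem: "\<And>H. open_hemisphere H \<Longrightarrow> \<exists>v \<in> vertices_of P. \<forall>f. f facet_of P \<and> v \<in> f \<longrightarrow> u f \<in> H"
      unfolding cond_iii_def by blast
    define V where "V = vertices_of P"
    have Vfin: "finite V" using vertices_finite[OF poly] by (simp add: V_def)
    define col where "col k \<longleftrightarrow> (\<exists>c :: 'a \<Rightarrow> nat. (\<forall>v\<in>V. c v < k) \<and>
                  (\<forall>v\<in>V. \<forall>w\<in>V. kneser_adj P v w \<longrightarrow> c v \<noteq> c w))" for k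
    have ex: "\<exists>k. col k"
    proof -
      obtain g :: "'a \<Rightarrow> nat" and n where g: "g ` V = {i. i < n}" "inj_on g V"
        using finite_imp_inj_to_nat_seg[OF Vfin] by blast
      have "col n" unfolding col_def
        by (rule exI[where x=g]) (use g in \<open>auto simp: kneser_adj_def inj_on_def\<close>)
      then show ?thesis by blast
    qed
    have chr: "chromatic_number V (kneser_adj P) = (LEAST k. col k)"
      by (simp add: chromatic_number_def col_def)
    show cond_iv unfolding cond_iv_def
    proof (rule ccontr)
      assume "\<not> DIM('a) + 1 \<le> chromatic_number (vertices_of P) (kneser_adj P)"
      then have lt: "(LEAST k. col k) \<le> DIM('a)" using chr V_def by simp
      have "col (LEAST k. col k)" using ex by (rule LeastI_ex)
      then obtain c :: "'a \<Rightarrow> nat" where c1: "\<forall>v\<in>V. c v < (LEAST k. col k)"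
        and c2: "\<forall>v\<in>V. \<forall>w\<in>V. kneser_adj P v w \<longrightarrow> c v \<noteq> c w"
        unfolding col_def by blast
      have cb: "c v < DIM('a)" if "v \<in> V" for v
        using c1 that lt by (meson order_less_le_trans)
      have cp: "c v \<noteq> c w" if "v \<in> V" "w \<in> V" "kneser_adj P v w" for v w
        using c2 that by blast
      define U where "U i = (\<Union>v\<in>{v\<in>V. c v = i}. \<Inter>f\<in>{f. f facet_of P \<and> v \<in> f}. {a. inner (u f) a > 0})" for i
      have ffin: "finite {f. f facet_of P}" using finite_polytope_facets[OF poly] by simp
      have op: "open (U i)" for i
        unfolding U_def
      proof (intro open_UN ballI open_INT)
        fix v assume "v \<in> {v \<in> V. c v = i}"
        show "finite {f. f facet_of P \<and> v \<in> f}" by (rule finite_subset[OF _ ffin]) auto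
      qed (rule open_halfspace_gt)
      have mem: "a \<in> U i \<longleftrightarrow> (\<exists>v\<in>V. c v = i \<and> (\<forall>f. f facet_of P \<and> v \<in> f \<longrightarrow> inner (u f) a > 0))" for a i
        by (auto simp: U_def)
      show False
      proof (rule LS_cover_global[of U])
        show "open (U i)" for i by (rule op)
      next
        fix a :: 'a assume a: "a \<in> sphere 0 1"
        then have "a \<noteq> 0" by auto
        then have "open_hemisphere {w \<in> sphere 0 1. inner a w > 0}"
          unfolding open_hemisphere_def by blast
        from hem[OF this] obtain v where v: "v \<in> V" "\<forall>f. f facet_of P \<and> v \<in> f \<longrightarrow> u f \<in> {w \<in> sphere 0 1. inner a w > 0}"
          unfolding V_def by blast
        then have "a \<in> U (c v)" unfolding mem by (auto simp: inner_commute)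
        then show "\<exists>i<DIM('a). a \<in> U i" using cb[OF v(1)] by blast
      next
        fix i and a :: 'a assume i: "i < DIM('a)" and a: "a \<in> sphere 0 1" and aU: "a \<in> U i"
        show "-a \<notin> U i"
        proof
          assume "-a \<in> U i"
          then obtain w where w: "w \<in> V" "c w = i" "\<And>f. f facet_of P \<Longrightarrow> w \<in> f \<Longrightarrow> inner (u f) (-a) > 0"
            unfolding mem by blast
          obtain v where v: "v \<in> V" "c v = i" "\<And>f. f facet_of P \<Longrightarrow> v \<in> f \<Longrightarrow> inner (u f) a > 0"
            using aU unfolding mem by blast
          obtain f where f: "f facet_of P" "v \<in> f" "w \<in> f"
          proof (cases "v = w")
            case True
            have "v \<in> vertices_of P" using v(1) by (simp add: V_def)
            then obtain f where "f facet_of P" "v \<in> f"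
              using vertex_in_facet[OF poly full] by blast
            then show ?thesis using that True by blast
          next
            case False
            then have "\<not> kneser_adj P v w" using cp[OF v(1) w(1)] v(2) w(2) by auto
            then show ?thesis using that False by (auto simp: kneser_adj_def)
          qed
          have "inner (u f) a > 0" using v(3)[OF f(1,2)] .
          moreover have "inner (u f) (-a) > 0" using w(3)[OF f(1,3)] .
          ultimately show False by simp
        qed
      qed
    qed
  qed
  show ?thesis using c12 c23 c34 by blast
qed

end
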